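(* Consider an execution of \textsf{Contagion} (described in the context) in which the sender $\sigma$ is correct and broadcasts $m$. If in this execution the underlying $pcb$ satisfies total validity (every correct process eventually $pcb$-delivers $m$) and $\sigma$ has no more than $D-\hat D$ Byzantine entries in its delivery sample, then \textsf{Contagion} satisfies validity in this execution, i.e., $\sigma$ eventually delivers $m$.
   Context: System model: a fixed set $\Pi$ of processes, some Byzantine and the rest correct, asynchronous reliable authenticated links (messages between correct processes are eventually delivered); signatures cannot be forged. $pcb$ is a probabilistic consistent broadcast instance with sender $\sigma$. \textsf{Contagion} (parameters $R,\hat R,D,\hat D$): each correct process draws a ready sample of $R$ and a delivery sample of $D$ entries, each uniformly from $\Pi$ with replacement, and sends ReadySubscribe to each, recording its own subscribers. To broadcast $m$, $\sigma$ $pcb$-broadcasts $(m,\mathrm{sign}_\sigma(m))$. Upon $pcb$-delivering a correctly signed pair, a correct process becomes ready for it and sends Ready for it to all current and future subscribers. Only correctly signed Ready messages are accepted, recorded separately for senders in the ready sample and in the delivery sample. When at least $\hat R$ members of its ready sample have sent Ready for a pair, a correct process becomes ready for it and sends Ready for it to its subscribers. A correct process delivers (at most once) the message of the first pair for which at least $\hat D$ members of its delivery sample have sent Ready. *)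

theory Defs
  imports Main
begin

text \<open>
  Abstract model of one execution of Contagion (one broadcast instance with
  sender sigma).  Time is discrete (nat); all "so far" quantities are
  cumulative sets indexed by time.

  - Correct :: set of correct processes (the others are Byzantine); Pi = UNIV.
  - rs p, ds p :: ready / delivery sample of p (lists, i.e. with replacement).
  - sent p q t :: messages sent by p to q up to time t.
  - rcvd q p t :: messages received (accepted) by q from p up to time t.
  - pcbd p t :: pairs (message, signature) pcb-delivered by p up to time t.
  - dlv p t :: message delivered by p up to time t (None = nothing yet).
  - vrf m s :: s is a correct signature of sigma on m.
\<close>

datatype ('m, 's) cmsg = ReadySubscribe | Ready "'m \<times> 's"

definition subscribers ::
  "('p \<Rightarrow> 'p \<Rightarrow> nat \<Rightarrow> ('m,'s) cmsg set) \<Rightarrow> 'p \<Rightarrow> nat \<Rightarrow> 'p set" where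
  "subscribers rcvd p t = {q. ReadySubscribe \<in> rcvd p q t}"

definition ready_count ::
  "('p \<Rightarrow> 'p \<Rightarrow> nat \<Rightarrow> ('m,'s) cmsg set) \<Rightarrow> 'p list \<Rightarrow> 'p \<Rightarrow> 'm \<times> 's \<Rightarrow> nat \<Rightarrow> nat" where
  "ready_count rcvd smp p pr t = card {i. i < length smp \<and> Ready pr \<in> rcvd p (smp ! i) t}"

definition ready_set ::
  "('m \<Rightarrow> 's \<Rightarrow> bool) \<Rightarrow> nat \<Rightarrow> ('p \<Rightarrow> 'p list) \<Rightarrow> ('p \<Rightarrow> nat \<Rightarrow> ('m \<times> 's) set)
   \<Rightarrow> ('p \<Rightarrow> 'p \<Rightarrow> nat \<Rightarrow> ('m,'s) cmsg set) \<Rightarrow> 'p \<Rightarrow> nat \<Rightarrow> ('m \<times> 's) set" where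
  "ready_set vrf Rh rs pcbd rcvd p t =
     {pr. vrf (fst pr) (snd pr) \<and> (pr \<in> pcbd p t \<or> Rh \<le> ready_count rcvd (rs p) p pr t)}"

text \<open>Asynchronous reliable authenticated links, cumulative histories.\<close>
definition network_ok ::
  "'p set \<Rightarrow> ('p \<Rightarrow> 'p \<Rightarrow> nat \<Rightarrow> ('m,'s) cmsg set) \<Rightarrow> ('p \<Rightarrow> 'p \<Rightarrow> nat \<Rightarrow> ('m,'s) cmsg set)
   \<Rightarrow> ('p \<Rightarrow> nat \<Rightarrow> ('m \<times> 's) set) \<Rightarrow> bool" where
  "network_ok Correct sent rcvd pcbd \<longleftrightarrow>
     (\<forall>p q t. sent p q t \<subseteq> sent p q (Suc t)) \<and>
     (\<forall>p q t. rcvd p q t \<subseteq> rcvd p q (Suc t)) \<and>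
     (\<forall>p t. pcbd p t \<subseteq> pcbd p (Suc t)) \<and>
     (\<forall>p q x t. p \<in> Correct \<longrightarrow> q \<in> Correct \<longrightarrow> x \<in> sent p q t \<longrightarrow>
        (\<exists>t'. x \<in> rcvd q p t')) \<and>
     (\<forall>p q x t. p \<in> Correct \<longrightarrow> q \<in> Correct \<longrightarrow> x \<in> rcvd q p t \<longrightarrow>
        (\<exists>t'\<le>t. x \<in> sent p q t'))"

definition contagion_proc ::
  "nat \<Rightarrow> nat \<Rightarrow> nat \<Rightarrow> nat \<Rightarrow> ('m \<Rightarrow> 's \<Rightarrow> bool) \<Rightarrow> ('p \<Rightarrow> 'p list) \<Rightarrow> ('p \<Rightarrow> 'p list)
   \<Rightarrow> ('p \<Rightarrow> 'p \<Rightarrow> nat \<Rightarrow> ('m,'s) cmsg set) \<Rightarrow> ('p \<Rightarrow> 'p \<Rightarrow> nat \<Rightarrow> ('m,'s) cmsg set)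
   \<Rightarrow> ('p \<Rightarrow> nat \<Rightarrow> ('m \<times> 's) set) \<Rightarrow> ('p \<Rightarrow> nat \<Rightarrow> 'm option) \<Rightarrow> 'p \<Rightarrow> bool" where
  "contagion_proc R Rh D Dh vrf rs ds sent rcvd pcbd dlv p \<longleftrightarrow>
     length (rs p) = R \<and> length (ds p) = D \<and>
     \<comment> \<open>ReadySubscribe is sent to every sample member, and only to them\<close>
     (\<forall>q \<in> set (rs p) \<union> set (ds p). \<exists>t. ReadySubscribe \<in> sent p q t) \<and>
     (\<forall>q t. ReadySubscribe \<in> sent p q t \<longrightarrow> q \<in> set (rs p) \<union> set (ds p)) \<and>
     \<comment> \<open>Ready for a pair is sent to all current and future subscribers once ready\<close>
     (\<forall>pr t q t'. pr \<in> ready_set vrf Rh rs pcbd rcvd p t \<longrightarrow> q \<in> subscribers rcvd p t' \<longrightarrow>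
        (\<exists>t''. Ready pr \<in> sent p q t'')) \<and>
     (\<forall>pr q t. Ready pr \<in> sent p q t \<longrightarrow>
        pr \<in> ready_set vrf Rh rs pcbd rcvd p t \<and> q \<in> subscribers rcvd p t) \<and>
     \<comment> \<open>delivery: at most once, of the first correctly signed pair reaching Dh\<close>
     (\<forall>t x. dlv p t = Some x \<longrightarrow> dlv p (Suc t) = Some x) \<and>
     (\<forall>x. dlv p 0 = Some x \<longrightarrow>
        (\<exists>s. vrf x s \<and> Dh \<le> ready_count rcvd (ds p) p (x, s) 0)) \<and>
     (\<forall>t x. dlv p t = None \<longrightarrow> dlv p (Suc t) = Some x \<longrightarrow>
        (\<exists>s. vrf x s \<and> Dh \<le> ready_count rcvd (ds p) p (x, s) (Suc t))) \<and>
     (\<forall>pr t. vrf (fst pr) (snd pr) \<longrightarrow> Dh \<le> ready_count rcvd (ds p) p pr t \<longrightarrow> dlv p t \<noteq> None)"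

end

theory Submission
  imports Defs
begin

lemma mono_hist:
  assumes "\<forall>t. (f::nat \<Rightarrow> 'a set) t \<subseteq> f (Suc t)" "t \<le> t'"
  shows "f t \<subseteq> f t'"
  using assms(2)
proof (induction t' rule: dec_induct)
  case base then show ?case by simp
next
  case (step n) then show ?case using assms(1) by blast
qed

theorem lemma20:
  fixes Correct :: "'p set"
    and rs ds :: "'p \<Rightarrow> 'p list"
    and sent rcvd :: "'p \<Rightarrow> 'p \<Rightarrow> nat \<Rightarrow> ('m, 's) cmsg set"
    and pcbd :: "'p \<Rightarrow> nat \<Rightarrow> ('m \<times> 's) set"
    and dlv :: "'p \<Rightarrow> nat \<Rightarrow> 'm option"
    and vrf :: "'m \<Rightarrow> 's \<Rightarrow> bool"
    and sign :: "'m \<Rightarrow> 's"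
    and \<sigma> :: 'p and m :: 'm
    and R Rh D Dh :: nat
  assumes net: "network_ok Correct sent rcvd pcbd"
    and proc: "\<forall>p \<in> Correct. contagion_proc R Rh D Dh vrf rs ds sent rcvd pcbd dlv p"
    and sender_correct: "\<sigma> \<in> Correct"
    and sign_ok: "vrf m (sign m)"
    and unforgeable: "\<forall>m' s. vrf m' s \<longrightarrow> m' = m"
    and total_validity: "\<forall>p \<in> Correct. \<exists>t. (m, sign m) \<in> pcbd p t"
    and few_byz: "int (length (filter (\<lambda>q. q \<notin> Correct) (ds \<sigma>))) \<le> int D - int Dh"
  shows "\<exists>t. dlv \<sigma> t = Some m"
proof -
  define pr where "pr = (m, sign m)"
  have rmono: "\<And>p q t t'. t \<le> t' \<Longrightarrow> rcvd p q t \<subseteq> rcvd p q t'"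
    using net unfolding network_ok_def by (intro mono_hist) auto
  have pmono: "\<And>p t t'. t \<le> t' \<Longrightarrow> pcbd p t \<subseteq> pcbd p t'"
    using net unfolding network_ok_def by (intro mono_hist) auto
  have ps: "contagion_proc R Rh D Dh vrf rs ds sent rcvd pcbd dlv \<sigma>"
    using proc sender_correct by blast
  have lenD: "length (ds \<sigma>) = D" using ps unfolding contagion_proc_def by simp
  have cp: "\<And>p. p \<in> Correct \<Longrightarrow> (\<forall>q \<in> set (rs p) \<union> set (ds p). \<exists>t. ReadySubscribe \<in> sent p q t) \<and>
     (\<forall>pr t q t'. pr \<in> ready_set vrf Rh rs pcbd rcvd p t \<longrightarrow> q \<in> subscribers rcvd p t' \<longrightarrow>
        (\<exists>t''. Ready pr \<in> sent p q t'')) \<and>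
     (\<forall>t x. dlv p t = Some x \<longrightarrow> dlv p (Suc t) = Some x) \<and>
     (\<forall>x. dlv p 0 = Some x \<longrightarrow>
        (\<exists>s. vrf x s \<and> Dh \<le> ready_count rcvd (ds p) p (x, s) 0)) \<and>
     (\<forall>t x. dlv p t = None \<longrightarrow> dlv p (Suc t) = Some x \<longrightarrow>
        (\<exists>s. vrf x s \<and> Dh \<le> ready_count rcvd (ds p) p (x, s) (Suc t))) \<and>
     (\<forall>pr t. vrf (fst pr) (snd pr) \<longrightarrow> Dh \<le> ready_count rcvd (ds p) p pr t \<longrightarrow> dlv p t \<noteq> None)"
    using proc unfolding contagion_proc_def by simp
  note cps = cp[OF sender_correct]
  have nw: "(\<forall>p q x t. p \<in> Correct \<longrightarrow> q \<in> Correct \<longrightarrow> x \<in> sent p q t \<longrightarrow>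
        (\<exists>t'. x \<in> rcvd q p t'))" using net unfolding network_ok_def by simp
  have get: "\<exists>t. Ready pr \<in> rcvd \<sigma> q t" if q: "q \<in> Correct" "q \<in> set (ds \<sigma>)" for q
  proof -
    obtain t0 where "ReadySubscribe \<in> sent \<sigma> q t0"
      using cps q by blast
    then obtain t1 where t1: "ReadySubscribe \<in> rcvd q \<sigma> t1"
      using nw q sender_correct by blast
    obtain t2 where t2: "pr \<in> pcbd q t2" using total_validity q pr_def by blast
    have "pr \<in> ready_set vrf Rh rs pcbd rcvd q t2"
      unfolding ready_set_def using t2 sign_ok pr_def by simp
    moreover have "\<sigma> \<in> subscribers rcvd q t1" unfolding subscribers_def using t1 by simp
    ultimately obtain t3 where "Ready pr \<in> sent q \<sigma> t3"
      using cp[OF q(1)] by blast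
    then show ?thesis using nw q sender_correct by blast
  qed
  define S where "S = set (ds \<sigma>) \<inter> Correct"
  have "\<forall>q \<in> S. \<exists>t. Ready pr \<in> rcvd \<sigma> q t" using get S_def by blast
  then obtain f where f: "\<forall>q \<in> S. Ready pr \<in> rcvd \<sigma> q (f q)" by metis
  define T where "T = sum f S"
  have fin: "finite S" unfolding S_def by simp
  have inT: "Ready pr \<in> rcvd \<sigma> q T" if "q \<in> S" for q
  proof -
    have "f q \<le> T" unfolding T_def using fin that by (simp add: member_le_sum)
    then show ?thesis using rmono f that by blast
  qed
  have sub: "{i. i < length (ds \<sigma>) \<and> ds \<sigma> ! i \<in> Correct}
      \<subseteq> {i. i < length (ds \<sigma>) \<and> Ready pr \<in> rcvd \<sigma> (ds \<sigma> ! i) T}"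
    using inT S_def by auto
  have "length (filter (\<lambda>q. q \<in> Correct) (ds \<sigma>)) + length (filter (\<lambda>q. q \<notin> Correct) (ds \<sigma>)) = D"
    using sum_length_filter_compl lenD by metis
  then have "Dh \<le> length (filter (\<lambda>q. q \<in> Correct) (ds \<sigma>))" using few_byz by linarith
  also have "\<dots> = card {i. i < length (ds \<sigma>) \<and> ds \<sigma> ! i \<in> Correct}"
    by (rule length_filter_conv_card)
  also have "\<dots> \<le> ready_count rcvd (ds \<sigma>) \<sigma> pr T"
    unfolding ready_count_def by (rule card_mono) (auto simp: sub)
  finally have "dlv \<sigma> T \<noteq> None"
    using cps sign_ok pr_def by auto
  then obtain x where x: "dlv \<sigma> T = Some x" by auto
  have vr: "\<forall>x. dlv \<sigma> t = Some x \<longrightarrow> (\<exists>s. vrf x s)" for t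
  proof (induction t)
    case 0 then show ?case using cps by blast
  next
    case (Suc t)
    show ?case
    proof (cases "dlv \<sigma> t")
      case None then show ?thesis using cps by blast
    next
      case (Some y)
      then have "dlv \<sigma> (Suc t) = Some y" using cps by blast
      then show ?thesis using Suc Some by auto
    qed
  qed
  then have "x = m" using x unforgeable by blast
  then show ?thesis using x by blast
qed

end
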